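(* Let $\mathbf{K}=\omega$ be a countable set with no structure (so $G=\mathrm{Aut}(\mathbf{K})=S_\infty$), with exhaustion $\mathbf{A}_m=\{0,\dots,m-1\}$, and $H_m$ the set of injections $\mathbf{A}_m\to\omega$. Then for every $m\geq2$, the set $B'_m$ is meager in $2^{H_m}$. In particular, every $T\subseteq H_m$ with $\overline{\chi_T\cdot G}=2^{H_m}$ (these form a dense $G_\delta$ subset of $2^{H_m}$) is not in $B'_m$.
   Context: Identify subsets of $H_n$ with $2^{H_n}$ (product topology), with right $G$-action $(\chi\cdot g)(f)=\chi(g\circ f)$. A set $S\subseteq H_n$ is minimal if $\overline{\chi_S\cdot G}$ is a minimal $G$-flow (every orbit dense). $B_n$ is the Boolean algebra of subsets of $H_n$ generated by the minimal subsets of $H_n$. For $m\leq n$ and $T\subseteq H_m$, $i^n_m(T)=\{s\in H_n: s|_{\mathbf{A}_m}\in T\}$, and $B'_m=\{T\subseteq H_m:\exists n\geq m\ (i^n_m(T)\in B_n)\}$. *)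

theory Defs
  imports "HOL-Analysis.Analysis"
begin

text \<open>H m = injections {0..<m} -> nat, represented as distinct lists of length m
  (the list xs represents i |-> xs!i). Composition g o f is map g xs and
  restriction to A_m is take m.\<close>

definition H :: "nat \<Rightarrow> nat list set" where
  "H m = {xs. length xs = m \<and> distinct xs}"

definition Sinf :: "(nat \<Rightarrow> nat) set" where
  "Sinf = {g. bij g}"

definition cube :: "nat \<Rightarrow> (nat list \<Rightarrow> bool) topology" where
  "cube m = product_topology (\<lambda>_. discrete_topology (UNIV :: bool set)) (H m)"

definition chi :: "nat \<Rightarrow> nat list set \<Rightarrow> (nat list \<Rightarrow> bool)" where
  "chi m S = restrict (\<lambda>xs. xs \<in> S) (H m)"

definition act :: "nat \<Rightarrow> (nat list \<Rightarrow> bool) \<Rightarrow> (nat \<Rightarrow> nat) \<Rightarrow> (nat list \<Rightarrow> bool)" where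
  "act m c g = restrict (\<lambda>xs. c (map g xs)) (H m)"

definition orbit :: "nat \<Rightarrow> (nat list \<Rightarrow> bool) \<Rightarrow> (nat list \<Rightarrow> bool) set" where
  "orbit m c = (\<lambda>g. act m c g) ` Sinf"

text \<open>S is minimal iff the orbit closure of chi_S is a minimal flow: every orbit in it is dense.\<close>
definition minimal_set :: "nat \<Rightarrow> nat list set \<Rightarrow> bool" where
  "minimal_set m S \<longleftrightarrow> S \<subseteq> H m \<and>
     (\<forall>y \<in> cube m closure_of orbit m (chi m S).
        cube m closure_of orbit m y = cube m closure_of orbit m (chi m S))"

inductive_set Balg :: "nat \<Rightarrow> nat list set set" for n where
  gen: "minimal_set n S \<Longrightarrow> S \<in> Balg n"
| empty: "{} \<in> Balg n"
| compl: "S \<in> Balg n \<Longrightarrow> H n - S \<in> Balg n"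
| union: "S \<in> Balg n \<Longrightarrow> T \<in> Balg n \<Longrightarrow> S \<union> T \<in> Balg n"

definition incl :: "nat \<Rightarrow> nat \<Rightarrow> nat list set \<Rightarrow> nat list set" where
  "incl n m T = {s \<in> H n. take m s \<in> T}"

definition Bprime :: "nat \<Rightarrow> nat list set set" where
  "Bprime m = {T. T \<subseteq> H m \<and> (\<exists>n\<ge>m. incl n m T \<in> Balg n)}"

definition nowhere_dense_in :: "'a topology \<Rightarrow> 'a set \<Rightarrow> bool" where
  "nowhere_dense_in X S \<longleftrightarrow> S \<subseteq> topspace X \<and> X interior_of (X closure_of S) = {}"

definition meager_in :: "'a topology \<Rightarrow> 'a set \<Rightarrow> bool" where
  "meager_in X S \<longleftrightarrow> (\<exists>F :: nat \<Rightarrow> 'a set. (\<forall>k. nowhere_dense_in X (F k)) \<and> S \<subseteq> (\<Union>k. F k))"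

end

theory Submission
  imports Defs "HOL-Library.Ramsey"
begin

lemma topspace_cube: "topspace (cube n) = (\<Pi>\<^sub>E s\<in>H n. UNIV)"
  by (simp add: cube_def)

lemma act_in: "act n c g \<in> topspace (cube n)"
  by (simp add: topspace_cube act_def)

lemma chi_in: "chi n S \<in> topspace (cube n)"
  by (simp add: topspace_cube chi_def)

lemma orbit_sub: "orbit n c \<subseteq> topspace (cube n)"
  using act_in by (auto simp: orbit_def)

definition cyl :: "nat \<Rightarrow> (nat list \<Rightarrow> bool) \<Rightarrow> nat list set \<Rightarrow> (nat list \<Rightarrow> bool) set" where
  "cyl n x D = {z \<in> topspace (cube n). \<forall>s\<in>D. z s = x s}"

lemma cyl_open:
  assumes "finite D" "x \<in> topspace (cube n)"
  shows "openin (cube n) (cyl n x D)"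
  unfolding cube_def openin_product_topology_alt
proof (intro ballI)
  fix z assume z: "z \<in> cyl n x D"
  define U where "U = (\<lambda>i. if i \<in> D then {x i} else (UNIV::bool set))"
  have "finite {i \<in> H n. U i \<noteq> topspace (discrete_topology UNIV)}"
    by (rule finite_subset[OF _ assms(1)]) (auto simp: U_def)
  moreover have "z \<in> Pi\<^sub>E (H n) U" using z by (auto simp: cyl_def topspace_cube U_def PiE_iff)
  moreover have "Pi\<^sub>E (H n) U \<subseteq> cyl n x D"
  proof
    fix w assume w: "w \<in> Pi\<^sub>E (H n) U"
    have "w \<in> topspace (cube n)" using w by (auto simp: topspace_cube PiE_iff)
    moreover have "\<forall>s\<in>D. w s = x s"
    proof
      fix s assume s: "s \<in> D"
      show "w s = x s"
      proof (cases "s \<in> H n")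
        case True then show ?thesis using w s by (auto simp: U_def PiE_iff)
      next
        case False
        have "w \<in> extensional (H n)" "x \<in> extensional (H n)" using w assms(2) by (auto simp: topspace_cube PiE_iff)
        then show ?thesis using extensional_arb[OF _ False] by metis
      qed
    qed
    ultimately show "w \<in> cyl n x D" by (simp add: cyl_def)
  qed
  moreover have "\<forall>i\<in>H n. openin (discrete_topology UNIV) (U i)" by simp
  ultimately show "\<exists>U. finite {i \<in> H n. U i \<noteq> topspace (discrete_topology UNIV)} \<and>
            (\<forall>i\<in>H n. openin (discrete_topology UNIV) (U i)) \<and> z \<in> Pi\<^sub>E (H n) U \<and> Pi\<^sub>E (H n) U \<subseteq> cyl n x D"
    by blast
qed

lemma open_cyl:
  assumes "openin (cube n) U" "z \<in> U"
  shows "\<exists>D. finite D \<and> cyl n z D \<subseteq> U"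
proof -
  obtain V where V: "finite {i \<in> H n. V i \<noteq> topspace (discrete_topology (UNIV::bool set))}"
     "z \<in> Pi\<^sub>E (H n) V" "Pi\<^sub>E (H n) V \<subseteq> U"
    using assms(1)[unfolded cube_def openin_product_topology_alt, THEN bspec, OF assms(2)] by (elim exE conjE) (rule that)
  define D where "D = {i \<in> H n. V i \<noteq> topspace (discrete_topology (UNIV::bool set))}"
  have "cyl n z D \<subseteq> Pi\<^sub>E (H n) V"
  proof
    fix w assume w: "w \<in> cyl n z D"
    show "w \<in> Pi\<^sub>E (H n) V"
    proof (unfold PiE_iff, intro conjI ballI)
      show "w \<in> extensional (H n)" using w by (auto simp: cyl_def topspace_cube PiE_iff)
      fix i assume i: "i \<in> H n"
      show "w i \<in> V i"
      proof (cases "i \<in> D")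
        case True then show ?thesis using w V(2) i by (auto simp: cyl_def PiE_iff)
      next
        case False then show ?thesis using i by (auto simp: D_def)
      qed
    qed
  qed
  then show ?thesis using V(1,3) D_def by blast
qed

lemma closure_char:
  assumes "x \<in> topspace (cube n)" "A \<subseteq> topspace (cube n)"
  shows "x \<in> cube n closure_of A \<longleftrightarrow> (\<forall>D. finite D \<longrightarrow> (\<exists>a\<in>A. \<forall>s\<in>D. a s = x s))"
proof
  assume x: "x \<in> cube n closure_of A"
  show "\<forall>D. finite D \<longrightarrow> (\<exists>a\<in>A. \<forall>s\<in>D. a s = x s)"
  proof (intro allI impI)
    fix D :: "nat list set" assume D: "finite D"
    have "x \<in> cyl n x D" using assms(1) by (simp add: cyl_def)
    then obtain a where "a \<in> A" "a \<in> cyl n x D"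
      using x cyl_open[OF D assms(1)] unfolding in_closure_of by blast
    then show "\<exists>a\<in>A. \<forall>s\<in>D. a s = x s" by (auto simp: cyl_def)
  qed
next
  assume R: "\<forall>D. finite D \<longrightarrow> (\<exists>a\<in>A. \<forall>s\<in>D. a s = x s)"
  show "x \<in> cube n closure_of A"
    unfolding in_closure_of
  proof (intro conjI allI impI assms(1))
    fix T assume T: "x \<in> T \<and> openin (cube n) T"
    then obtain D where D: "finite D" "cyl n x D \<subseteq> T" using open_cyl by blast
    then obtain a where "a \<in> A" "\<forall>s\<in>D. a s = x s" using R by blast
    then have "a \<in> cyl n x D" using assms(2) by (auto simp: cyl_def)
    then show "\<exists>y. y \<in> A \<and> y \<in> T" using D \<open>a \<in> A\<close> by blast
  qed
qed

lemma nowhere_dense_crit: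
  assumes "F \<subseteq> topspace X"
    and "\<And>U. openin X U \<Longrightarrow> U \<noteq> {} \<Longrightarrow> \<exists>V. openin X V \<and> V \<noteq> {} \<and> V \<subseteq> U \<and> V \<inter> F = {}"
  shows "nowhere_dense_in X F"
  unfolding nowhere_dense_in_def
proof (intro conjI assms(1))
  show "X interior_of (X closure_of F) = {}"
  proof (rule ccontr)
    let ?U = "X interior_of (X closure_of F)"
    assume "?U \<noteq> {}"
    moreover have "openin X ?U" by (rule openin_interior_of)
    ultimately obtain V where V: "openin X V" "V \<noteq> {}" "V \<subseteq> ?U" "V \<inter> F = {}"
      using assms(2)[of ?U] by blast
    have "V \<inter> X closure_of F = {}" using openin_Int_closure_of_eq_empty[OF V(1)] V(4) by (rule iffD2)
    moreover have "V \<subseteq> X closure_of F" using V(3) interior_of_subset by (rule subset_trans)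
    ultimately show False using V(2) by (simp add: Int_absorb2)
  qed
qed

definition pat :: "nat list \<Rightarrow> (nat \<times> nat) set" where
  "pat s = {(i,j). i < length s \<and> j < length s \<and> s!i < s!j}"

lemma card_less_aux:
  fixes x y :: nat
  assumes "finite X" "x < y" "x \<in> X"
  shows "card {z\<in>X. z<x} < card {z\<in>X. z<y}"
proof (rule psubset_card_mono)
  show "finite {z\<in>X. z<y}" using assms(1) by simp
  have "{z\<in>X. z<x} \<subseteq> {z\<in>X. z<y}" using assms(2) by auto
  moreover have "x \<in> {z\<in>X. z<y}" "x \<notin> {z\<in>X. z<x}" using assms by auto
  ultimately show "{z\<in>X. z<x} \<subset> {z\<in>X. z<y}" by blast
qed

lemma card_less_eq:
  fixes x y :: nat
  assumes "finite X" "x \<in> X" "y \<in> X" "card {z\<in>X. z<x} = card {z\<in>X. z<y}"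
  shows "x = y"
proof (rule ccontr)
  assume "x \<noteq> y"
  then consider "x < y" | "y < x" by linarith
  then show False
  proof cases
    case 1
    then show False using card_less_aux[OF assms(1) 1 assms(2)] assms(4) by simp
  next
    case 2
    then show False using card_less_aux[OF assms(1) 2 assms(3)] assms(4) by simp
  qed
qed

lemma count_pat:
  assumes "distinct s" "i < length s"
  shows "card {z \<in> set s. z < s!i} = card {j. (j,i) \<in> pat s}"
proof -
  have eq: "{z \<in> set s. z < s!i} = (\<lambda>j. s!j) ` {j. (j,i) \<in> pat s}"
    using assms(2) by (auto simp: pat_def in_set_conv_nth)
  have "inj_on (\<lambda>j. s!j) {j. (j,i) \<in> pat s}"
    by (rule inj_on_nth[OF assms(1)]) (auto simp: pat_def)
  then show ?thesis unfolding eq by (rule card_image)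
qed

lemma pat_unique:
  assumes "distinct a" "distinct b" "length a = length b" "set a = set b" "pat a = pat b"
  shows "a = b"
proof (rule nth_equalityI[OF assms(3)])
  fix i assume i: "i < length a"
  have ib: "i < length b" using i assms(3) by simp
  have "card {z \<in> set a. z < a!i} = card {j. (j,i) \<in> pat a}" by (rule count_pat[OF assms(1) i])
  also have "\<dots> = card {j. (j,i) \<in> pat b}" using assms(5) by simp
  also have "\<dots> = card {z \<in> set b. z < b!i}" by (rule count_pat[OF assms(2) ib, symmetric])
  finally have c: "card {z \<in> set a. z < a!i} = card {z \<in> set a. z < b!i}" using assms(4) by simp
  have m1: "a!i \<in> set a" using i by (rule nth_mem)
  have m2: "b!i \<in> set a" using ib assms(4) nth_mem by metis
  show "a!i = b!i" by (rule card_less_eq[OF _ m1 m2 c]) simp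
qed

lemma pat_map_mono:
  assumes "strict_mono h"
  shows "pat (map h s) = pat s"
  using assms by (auto simp: pat_def strict_mono_less)


lemma pat_sub: "pat s \<subseteq> {..<length s} \<times> {..<length s}"
  by (auto simp: pat_def)

lemma ramsey_pattern:
  "\<exists>h t. strict_mono (h::nat\<Rightarrow>nat) \<and> (\<forall>s\<in>H n. map h s \<in> S \<longleftrightarrow> pat s \<in> t)"
proof -
  define K where "K = Pow (Pow ({..<n}\<times>{..<n}))"
  have finK: "finite K" by (simp add: K_def)
  define col where "col X = {pat s | s. s \<in> S \<and> s \<in> H n \<and> set s = X}" for X :: "nat set"
  have colK: "col X \<in> K" for X
  proof -
    have "col X \<subseteq> Pow ({..<n}\<times>{..<n})"
    proof
      fix P assume "P \<in> col X"
      then obtain s where s: "s \<in> H n" "P = pat s" unfolding col_def by blast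
      then show "P \<in> Pow ({..<n}\<times>{..<n})" using pat_sub[of s] by (simp add: H_def)
    qed
    then show ?thesis by (simp add: K_def)
  qed
  obtain e where e: "bij_betw e K {0..<card K}" using ex_bij_betw_finite_nat[OF finK] by blast
  define f where "f X = e (col X)" for X
  have fK: "f ` nsets (UNIV::nat set) n \<subseteq> {..<card K}"
  proof (rule image_subsetI)
    fix X :: "nat set"
    have "e (col X) \<in> {0..<card K}" using bij_betwE[OF e] colK by blast
    then show "f X \<in> {..<card K}" by (simp add: f_def)
  qed
  obtain Y t0 where Y0: "Y \<subseteq> UNIV" "infinite Y" "t0 < card K" "f ` nsets Y n \<subseteq> {t0}"
    by (rule Ramsey_nsets[OF infinite_UNIV_nat fK])
  have Y: "infinite Y" "f ` nsets Y n \<subseteq> {t0}" using Y0 by simp_all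
  define h where "h = enumerate Y"
  have hm: "strict_mono h" unfolding h_def strict_mono_def using Y(1) by (simp add: enumerate_mono)
  have hY: "h x \<in> Y" for x unfolding h_def using Y(1) by (rule enumerate_in_set)
  define t where "t = inv_into K e t0"
  have colt: "col X = t" if "X \<in> nsets Y n" for X
  proof -
    have "e (col X) = t0" using Y(2) that by (auto simp: f_def)
    then show ?thesis unfolding t_def using colK e
      by (metis bij_betw_def inv_into_f_f)
  qed
  have "\<forall>s\<in>H n. map h s \<in> S \<longleftrightarrow> pat s \<in> t"
  proof
    fix s assume s: "s \<in> H n"
    have injh: "inj h" using hm by (rule strict_mono_imp_inj_on)
    have dm: "distinct (map h s)" using s injh by (auto simp: H_def distinct_map inj_on_def)
    have X: "h ` set s \<in> nsets Y n"
      using s hY injh by (auto simp: nsets_def H_def card_image distinct_card inj_on_def)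
    have pm: "pat (map h s) = pat s" by (rule pat_map_mono[OF hm])
    show "map h s \<in> S \<longleftrightarrow> pat s \<in> t"
    proof
      assume "map h s \<in> S"
      then have "pat (map h s) \<in> col (h ` set s)"
        unfolding col_def using dm s by (auto simp: H_def)
      then show "pat s \<in> t" using colt[OF X] pm by simp
    next
      assume "pat s \<in> t"
      then have "pat s \<in> col (h ` set s)" using colt[OF X] by simp
      then obtain s' where s': "s' \<in> S" "s' \<in> H n" "set s' = h ` set s" "pat s' = pat s"
        unfolding col_def by blast
      have "s' = map h s"
        by (rule pat_unique) (use s' s dm pm in \<open>auto simp: H_def\<close>)
      then show "map h s \<in> S" using s' by simp
    qed
  qed
  then show ?thesis using hm by blast
qed


lemma extend_bij:
  assumes "inj (h::nat\<Rightarrow>nat)" "finite V"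
  shows "\<exists>g\<in>Sinf. \<forall>x\<in>V. g x = h x"
proof -
  define M where "M = Suc (Max (insert 0 (V \<union> h ` V)))"
  have fin: "finite (insert 0 (V \<union> h ` V))" using assms(2) by simp
  have VM: "V \<subseteq> {..<M}" unfolding M_def using Max_ge[OF fin] by (auto simp: less_Suc_eq_le)
  have hVM: "h ` V \<subseteq> {..<M}" unfolding M_def using Max_ge[OF fin] by (auto simp: less_Suc_eq_le)
  have ch: "card (h ` V) = card V" using assms(1) by (simp add: card_image inj_on_subset)
  have cD: "card ({..<M} - V) = card ({..<M} - h ` V)"
    using VM hVM ch assms(2) by (simp add: card_Diff_subset)
  have "\<exists>\<phi>. bij_betw \<phi> ({..<M} - V) ({..<M} - h ` V)"
    by (rule finite_same_card_bij) (simp_all add: cD)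
  then obtain \<phi> where phi: "bij_betw \<phi> ({..<M} - V) ({..<M} - h ` V)" by (elim exE)
  define g where "g x = (if x \<in> V then h x else if x < M then \<phi> x else x)" for x
  have b1: "bij_betw g V (h ` V)"
    using bij_betw_cong[of V g h] inj_on_imp_bij_betw[OF inj_on_subset[OF assms(1)]] by (simp add: g_def)
  have b2: "bij_betw g ({..<M} - V) ({..<M} - h ` V)"
    using bij_betw_cong[of "{..<M} - V" g \<phi>] phi by (simp add: g_def)
  have b3: "bij_betw g {M..} {M..}"
  proof -
    have "\<And>a. a \<in> {M..} \<Longrightarrow> g a = id a" using VM by (auto simp: g_def)
    then have "bij_betw g {M..} {M..} = bij_betw id {M..} {M..}" by (rule bij_betw_cong)
    then show ?thesis by simp
  qed
  have b12: "bij_betw g (V \<union> ({..<M} - V)) (h ` V \<union> ({..<M} - h ` V))"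
    by (rule bij_betw_combine[OF b1 b2]) blast
  have "bij_betw g ((V \<union> ({..<M} - V)) \<union> {M..}) ((h ` V \<union> ({..<M} - h ` V)) \<union> {M..})"
    by (rule bij_betw_combine[OF b12 b3]) (use hVM in auto)
  moreover have "(V \<union> ({..<M} - V)) \<union> {M..} = UNIV" by auto
  moreover have "(h ` V \<union> ({..<M} - h ` V)) \<union> {M..} = UNIV" by auto
  ultimately have "bij g" by simp
  then show ?thesis by (auto simp: Sinf_def g_def)
qed


definition rk :: "(nat \<Rightarrow> nat) \<Rightarrow> nat \<Rightarrow> nat \<Rightarrow> nat" where
  "rk g N a = card {b \<in> {..<N}. g b < g a}"

lemma rk_less_iff:
  assumes "a < N"
  shows "rk g N a < rk g N b \<longleftrightarrow> g a < g b"
proof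
  assume ab: "g a < g b"
  show "rk g N a < rk g N b" unfolding rk_def
  proof (rule psubset_card_mono)
    show "finite {c \<in> {..<N}. g c < g b}" by simp
    have "{c \<in> {..<N}. g c < g a} \<subseteq> {c \<in> {..<N}. g c < g b}" using ab by auto
    moreover have "a \<in> {c \<in> {..<N}. g c < g b}" "a \<notin> {c \<in> {..<N}. g c < g a}" using ab assms by auto
    ultimately show "{c \<in> {..<N}. g c < g a} \<subset> {c \<in> {..<N}. g c < g b}" by blast
  qed
next
  assume "rk g N a < rk g N b"
  show "g a < g b"
  proof (rule ccontr)
    assume "\<not> g a < g b"
    then have "{c \<in> {..<N}. g c < g b} \<subseteq> {c \<in> {..<N}. g c < g a}" by auto
    then have "rk g N b \<le> rk g N a" unfolding rk_def by (rule card_mono[rotated]) simp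
    then show False using \<open>rk g N a < rk g N b\<close> by simp
  qed
qed

lemma rk_less:
  assumes "a < N"
  shows "rk g N a < N"
proof -
  have "{c \<in> {..<N}. g c < g a} \<subseteq> {..<N} - {a}" by auto
  then have "rk g N a \<le> card ({..<N} - {a})" unfolding rk_def by (rule card_mono[rotated]) simp
  also have "\<dots> = N - 1" using assms by simp
  finally show ?thesis using assms by simp
qed


definition LL :: "nat \<Rightarrow> nat \<Rightarrow> nat list set" where
  "LL n N = {s \<in> H n. set s \<subseteq> {..<N}}"

definition cfg :: "nat \<Rightarrow> nat list set \<Rightarrow> (nat \<Rightarrow> nat) \<Rightarrow> nat \<Rightarrow> nat list set" where
  "cfg n S g N = {s \<in> LL n N. map g s \<in> S}"

definition CC :: "nat \<Rightarrow> nat list set \<Rightarrow> nat \<Rightarrow> nat list set set" where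
  "CC n S N = (\<lambda>g. cfg n S g N) ` Sinf"

lemma finite_LL: "finite (LL n N)"
proof (rule finite_subset)
  show "LL n N \<subseteq> {xs. set xs \<subseteq> {..<N} \<and> length xs = n}" by (auto simp: LL_def H_def)
  show "finite {xs. set xs \<subseteq> {..<N} \<and> length xs = n}" by (rule finite_lists_length_eq) simp
qed

lemma CC_sub: "CC n S N \<subseteq> Pow (LL n N)"
  by (auto simp: CC_def cfg_def)

lemma finite_CC: "finite (CC n S N)"
  using CC_sub finite_LL by (meson finite_Pow_iff finite_subset)

lemma Sinf_inj: "g \<in> Sinf \<Longrightarrow> inj g"
  by (simp add: Sinf_def bij_is_inj)

lemma map_H: "inj g \<Longrightarrow> s \<in> H n \<Longrightarrow> map g s \<in> H n"
  by (auto simp: H_def distinct_map inj_on_def)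

lemma id_Sinf: "id \<in> Sinf" by (simp add: Sinf_def)

lemma CC_empty: "CC n {} N = {{}}"
  using id_Sinf by (auto simp: CC_def cfg_def)

lemma CC_compl: "CC n (H n - S) N = (\<lambda>a. LL n N - a) ` CC n S N"
proof -
  have "cfg n (H n - S) g N = LL n N - cfg n S g N" if "g \<in> Sinf" for g
    using map_H[OF Sinf_inj[OF that]] by (auto simp: cfg_def LL_def)
  then show ?thesis unfolding CC_def image_image by (rule image_cong[OF refl])
qed

lemma CC_union: "CC n (S \<union> T) N \<subseteq> (\<lambda>(a,b). a \<union> b) ` (CC n S N \<times> CC n T N)"
proof
  fix c assume "c \<in> CC n (S \<union> T) N"
  then obtain g where g: "g \<in> Sinf" "c = cfg n (S \<union> T) g N" by (auto simp: CC_def)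
  have "c = (\<lambda>(a,b). a \<union> b) (cfg n S g N, cfg n T g N)" using g(2) by (auto simp: cfg_def)
  moreover have "(cfg n S g N, cfg n T g N) \<in> CC n S N \<times> CC n T N" using g(1) by (simp add: CC_def)
  ultimately show "c \<in> (\<lambda>(a,b). a \<union> b) ` (CC n S N \<times> CC n T N)" by (rule image_eqI)
qed

lemma card_CC_union: "card (CC n (S \<union> T) N) \<le> card (CC n S N) * card (CC n T N)"
proof -
  have "card (CC n (S \<union> T) N) \<le> card ((\<lambda>(a,b). a \<union> b) ` (CC n S N \<times> CC n T N))"
    by (rule card_mono[OF _ CC_union]) (simp add: finite_CC)
  also have "\<dots> \<le> card (CC n S N \<times> CC n T N)" by (rule card_image_le) (simp add: finite_CC)
  also have "\<dots> = card (CC n S N) * card (CC n T N)" by (rule card_cartesian_product)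
  finally show ?thesis .
qed

lemma card_CC_compl: "card (CC n (H n - S) N) \<le> card (CC n S N)"
  unfolding CC_compl by (rule card_image_le[OF finite_CC])

definition good :: "nat \<Rightarrow> nat list set \<Rightarrow> bool" where
  "good n S \<longleftrightarrow> (\<exists>k. \<forall>N. card (CC n S N) \<le> (N^N)^k)"

lemma pat_rk:
  assumes "set s \<subseteq> {..<N}"
  shows "pat (map g s) = pat (map (restrict (rk g N) {..<N}) s)"
proof -
  have sN: "s!i < N" if "i < length s" for i using assms nth_mem[OF that] by blast
  have "(g (s!i) < g (s!j)) = (restrict (rk g N) {..<N} (s!i) < restrict (rk g N) {..<N} (s!j))"
    if "i < length s" "j < length s" for i j
    using sN[OF that(1)] sN[OF that(2)] rk_less_iff[of "s!i" N g "s!j"] by simp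
  then show ?thesis unfolding pat_def by auto
qed

lemma minimal_bound:
  assumes "minimal_set n S"
  shows "card (CC n S N) \<le> N^N"
proof -
  obtain h t where h: "strict_mono h" "\<forall>s\<in>H n. map h s \<in> S \<longleftrightarrow> pat s \<in> t"
    using ramsey_pattern[of n S] by blast
  define S' where "S' = {s\<in>H n. pat s \<in> t}"
  have injh: "inj h" using h(1) by (rule strict_mono_imp_inj_on)
  have "\<forall>D. finite D \<longrightarrow> (\<exists>a\<in>orbit n (chi n S). \<forall>s\<in>D. a s = chi n S' s)"
  proof (intro allI impI)
    fix D :: "nat list set" assume D: "finite D"
    have fV: "finite (\<Union>(set ` D))" using D by simp
    obtain g where g: "g \<in> Sinf" "\<forall>x\<in>\<Union>(set ` D). g x = h x"
      using extend_bij[OF injh fV] by blast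
    have "\<forall>s\<in>D. act n (chi n S) g s = chi n S' s"
    proof
      fix s assume s: "s \<in> D"
      show "act n (chi n S) g s = chi n S' s"
      proof (cases "s \<in> H n")
        case True
        have mg: "map g s = map h s" using g(2) s by (auto intro: map_cong)
        have "act n (chi n S) g s = chi n S (map g s)" using True by (simp add: act_def)
        also have "\<dots> = chi n S (map h s)" by (simp only: mg)
        also have "\<dots> = (map h s \<in> S)" using map_H[OF injh True] by (simp add: chi_def)
        also have "\<dots> = chi n S' s" using True h(2) by (simp add: chi_def S'_def)
        finally show ?thesis .
      next
        case False then show ?thesis by (simp add: act_def chi_def)
      qed
    qed
    moreover have "act n (chi n S) g \<in> orbit n (chi n S)" using g(1) by (simp add: orbit_def)
    ultimately show "\<exists>a\<in>orbit n (chi n S). \<forall>s\<in>D. a s = chi n S' s" by blast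
  qed
  then have inS: "chi n S' \<in> cube n closure_of orbit n (chi n S)"
    using closure_char[OF chi_in orbit_sub] by (rule iffD2[rotated])
  then have eqc: "cube n closure_of orbit n (chi n S') = cube n closure_of orbit n (chi n S)"
    using assms unfolding minimal_set_def by blast
  define \<Phi> where "\<Phi> r = {s \<in> LL n N. pat (map r s) \<in> t}" for r
  have "CC n S N \<subseteq> \<Phi> ` (PiE {..<N} (\<lambda>_. {..<N}))"
  proof
    fix c assume "c \<in> CC n S N"
    then obtain g where g: "g\<in>Sinf" "c = cfg n S g N" by (auto simp: CC_def)
    have "act n (chi n S) g \<in> orbit n (chi n S)" using g(1) by (simp add: orbit_def)
    then have "act n (chi n S) g \<in> cube n closure_of orbit n (chi n S')"
      using closure_of_subset[OF orbit_sub, of n "chi n S"] eqc by blast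
    then have "\<forall>D. finite D \<longrightarrow> (\<exists>a\<in>orbit n (chi n S'). \<forall>s\<in>D. a s = act n (chi n S) g s)"
      using closure_char[OF act_in orbit_sub] by (rule iffD1[rotated])
    then obtain a where a: "a \<in> orbit n (chi n S')" "\<forall>s\<in>LL n N. a s = act n (chi n S) g s"
      using finite_LL by blast
    then obtain g' where g': "g'\<in>Sinf" "a = act n (chi n S') g'" by (auto simp: orbit_def)
    define r where "r = restrict (rk g' N) {..<N}"
    have rP: "r \<in> PiE {..<N} (\<lambda>_. {..<N})" using rk_less by (auto simp: r_def)
    have "s \<in> c \<longleftrightarrow> s \<in> \<Phi> r" for s
    proof (cases "s \<in> LL n N")
      case False then show ?thesis by (simp add: g(2) cfg_def \<Phi>_def)
    next
      case True
      have sH: "s \<in> H n" and sN: "set s \<subseteq> {..<N}" using True by (auto simp: LL_def)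
      have "s \<in> c \<longleftrightarrow> map g s \<in> S" using True g(2) by (simp add: cfg_def)
      also have "\<dots> \<longleftrightarrow> act n (chi n S) g s"
        using sH map_H[OF Sinf_inj[OF g(1)] sH] by (simp add: act_def chi_def)
      also have "\<dots> \<longleftrightarrow> a s" using a(2) True by simp
      also have "\<dots> \<longleftrightarrow> pat (map g' s) \<in> t"
        using g'(2) sH map_H[OF Sinf_inj[OF g'(1)] sH] by (simp add: act_def chi_def S'_def)
      also have "pat (map g' s) = pat (map r s)" unfolding r_def by (rule pat_rk[OF sN])
      also have "(pat (map r s) \<in> t) \<longleftrightarrow> s \<in> \<Phi> r" using True by (simp add: \<Phi>_def)
      finally show ?thesis .
    qed
    then have "c = \<Phi> r" by blast
    then show "c \<in> \<Phi> ` PiE {..<N} (\<lambda>_. {..<N})" using rP by blast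
  qed
  then have "card (CC n S N) \<le> card (\<Phi> ` (PiE {..<N} (\<lambda>_. {..<N})))"
    by (rule card_mono[rotated]) (simp add: finite_PiE)
  also have "\<dots> \<le> card (PiE {..<N} (\<lambda>_::nat. {..<N::nat}))" by (rule card_image_le) (simp add: finite_PiE)
  also have "\<dots> = N^N" by (simp add: card_PiE)
  finally show ?thesis .
qed

lemma Balg_good:
  assumes "S \<in> Balg n"
  shows "good n S"
  using assms
proof (induction rule: Balg.induct)
  case (gen S)
  then show ?case unfolding good_def using minimal_bound[OF gen] by (metis power_one_right)
next
  case empty
  then show ?case unfolding good_def by (intro exI[of _ 0]) (simp add: CC_empty)
next
  case (compl S)
  then obtain k where k: "\<forall>N. card (CC n S N) \<le> (N^N)^k" unfolding good_def by blast
  show ?case unfolding good_def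
    using k card_CC_compl le_trans by blast
next
  case (union S T)
  then obtain k k' where k: "\<forall>N. card (CC n S N) \<le> (N^N)^k" "\<forall>N. card (CC n T N) \<le> (N^N)^k'"
    unfolding good_def by blast
  have "card (CC n (S \<union> T) N) \<le> (N^N)^(k+k')" for N
  proof -
    have "card (CC n (S \<union> T) N) \<le> card (CC n S N) * card (CC n T N)" by (rule card_CC_union)
    also have "\<dots> \<le> (N^N)^k * (N^N)^k'" using k by (intro mult_le_mono) auto
    also have "\<dots> = (N^N)^(k+k')" by (simp add: power_add)
    finally show ?thesis .
  qed
  then show ?case unfolding good_def by blast
qed


lemma sq_le_pow2: "L \<ge> 4 \<Longrightarrow> L * L \<le> (2::nat)^L"
proof (induction L rule: dec_induct)
  case base then show ?case by simp
next
  case (step L)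
  have "Suc L * Suc L = L*L + 2*L + 1" by simp
  also have "\<dots> \<le> L*L + L*L"
  proof -
    have "4*L \<le> L*L" using mult_le_mono1[OF step(1), of L] by simp
    then show ?thesis using step(1) by linarith
  qed
  also have "\<dots> \<le> 2^L + 2^L" using step(3) by simp
  also have "\<dots> = 2^Suc L" by simp
  finally show ?case .
qed

lemma exp_beats_lin: "\<exists>L. a * L + b < (2::nat)^L"
proof -
  define L where "L = a + b + 5"
  have "a * L + b < L * L" unfolding L_def by (simp add: algebra_simps)
  also have "\<dots> \<le> 2^L" by (rule sq_le_pow2) (simp add: L_def)
  finally show ?thesis by blast
qed

lemma asym: "\<exists>N. ((N+c)^(N+c))^k < (2::nat)^(N*N-N)"
proof -
  obtain L where L: "2*k*L + (2*k + 1 + c) < (2::nat)^L" using exp_beats_lin by blast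
  define N where "N = (2::nat)^L"
  have Npos: "N > 0" by (simp add: N_def)
  have cN: "c \<le> N" using L by (simp add: N_def)
  have kN: "2*(L+1)*k < N - 1" using L by (simp add: N_def algebra_simps)
  have "N + c \<le> 2^(L+1)" using cN by (simp add: N_def)
  have "((N+c)^(N+c))^k = (N+c)^((N+c)*k)" by (simp add: power_mult)
  also have "\<dots> \<le> ((2::nat)^(L+1))^((N+c)*k)"
    by (rule power_mono) (use \<open>N + c \<le> 2^(L+1)\<close> in simp_all)
  also have "\<dots> = 2^((L+1)*(N+c)*k)" by (simp only: power_mult[symmetric] mult.assoc)
  also have "\<dots> < 2^(N*N-N)"
  proof (rule power_strict_increasing)
    have "(L+1)*(N+c)*k \<le> (L+1)*(2*N)*k" using cN by (intro mult_le_mono) auto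
    also have "\<dots> = N * (2*(L+1)*k)" by (simp add: algebra_simps)
    also have "\<dots> < N * (N - 1)" using kN Npos by simp
    also have "\<dots> = N*N - N" by (simp add: algebra_simps)
    finally show "(L+1)*(N+c)*k < N*N - N" .
  qed simp
  finally show ?thesis by blast
qed


lemma CC_incl:
  assumes "m \<le> n"
  shows "card (CC m T N) \<le> card (CC n (incl n m T) (N + (n-m)))"
proof -
  define tl where "tl = [N..<N+(n-m)]"
  define \<psi> where "\<psi> B = {s'\<in>LL m N. s' @ tl \<in> B}" for B
  have ext: "s' @ tl \<in> LL n (N + (n-m))" if s': "s' \<in> LL m N" for s'
  proof -
    have "set s' \<subseteq> {..<N}" "distinct s'" "length s' = m" using s' by (auto simp: LL_def H_def)
    moreover have "set s' \<inter> set tl = {}" using \<open>set s' \<subseteq> {..<N}\<close> by (auto simp: tl_def)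
    ultimately show ?thesis using assms by (auto simp: LL_def H_def tl_def)
  qed
  have "CC m T N \<subseteq> \<psi> ` CC n (incl n m T) (N + (n-m))"
  proof
    fix c assume "c \<in> CC m T N"
    then obtain g where g: "g \<in> Sinf" "c = cfg m T g N" by (auto simp: CC_def)
    have "c = \<psi> (cfg n (incl n m T) g (N + (n-m)))"
    proof -
      have "s' \<in> c \<longleftrightarrow> s' \<in> \<psi> (cfg n (incl n m T) g (N + (n-m)))" for s'
      proof (cases "s' \<in> LL m N")
        case False then show ?thesis by (simp add: g(2) cfg_def \<psi>_def)
      next
        case True
        have e: "s' @ tl \<in> LL n (N + (n-m))" by (rule ext[OF True])
        have len: "length s' = m" using True by (simp add: LL_def H_def)
        have eH: "s' @ tl \<in> H n" using e by (simp add: LL_def)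
        have mH: "map g (s' @ tl) \<in> H n" by (rule map_H[OF Sinf_inj[OF g(1)] eH])
        have "take m (map g (s' @ tl)) = map g s'" using len by simp
        then have "map g (s' @ tl) \<in> incl n m T \<longleftrightarrow> map g s' \<in> T" using mH by (simp add: incl_def)
        then show ?thesis using True e by (simp add: g(2) cfg_def \<psi>_def)
      qed
      then show ?thesis by blast
    qed
    moreover have "cfg n (incl n m T) g (N + (n-m)) \<in> CC n (incl n m T) (N + (n-m))"
      using g(1) by (simp add: CC_def)
    ultimately show "c \<in> \<psi> ` CC n (incl n m T) (N + (n-m))" by (rule image_eqI)
  qed
  then have "card (CC m T N) \<le> card (\<psi> ` CC n (incl n m T) (N + (n-m)))"
    by (rule card_mono[rotated]) (simp add: finite_CC)
  also have "\<dots> \<le> card (CC n (incl n m T) (N + (n-m)))" by (rule card_image_le[OF finite_CC])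
  finally show ?thesis .
qed

lemma LL_lower:
  assumes "m \<ge> 2"
  shows "N*N - N \<le> card (LL m (N + (m-2)))"
proof -
  define P where "P = ({..<N}\<times>{..<N}) - (\<lambda>a. (a,a)) ` {..<N}"
  define \<phi> where "\<phi> p = [fst p, snd p] @ [N..<N+(m-2)]" for p :: "nat\<times>nat"
  have cP: "card P = N*N - N"
  proof -
    have "card ((\<lambda>a. (a,a)) ` {..<N}) = N" by (simp add: card_image inj_on_def)
    then show ?thesis unfolding P_def by (subst card_Diff_subset) auto
  qed
  have inj: "inj_on \<phi> P" by (auto simp: inj_on_def \<phi>_def)
  have sub: "\<phi> ` P \<subseteq> LL m (N + (m-2))"
    using assms by (auto simp: P_def \<phi>_def LL_def H_def)
  have "card P = card (\<phi> ` P)" using inj by (simp add: card_image)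
  also have "\<dots> \<le> card (LL m (N + (m-2)))" by (rule card_mono[OF finite_LL sub])
  finally show ?thesis using cP by simp
qed

lemma key:
  assumes m: "m \<ge> 2" and nm: "n \<ge> m" and B: "incl n m T \<in> Balg n"
  shows "\<exists>N A. A \<subseteq> LL m N \<and> (\<forall>g\<in>Sinf. cfg m T g N \<noteq> A)"
proof (rule ccontr)
  assume "\<not> ?thesis"
  then have all: "\<forall>N A. A \<subseteq> LL m N \<longrightarrow> (\<exists>g\<in>Sinf. cfg m T g N = A)" by blast
  obtain k where k: "\<forall>N. card (CC n (incl n m T) N) \<le> (N^N)^k"
    using Balg_good[OF B] unfolding good_def by blast
  define c where "c = n - 2"
  obtain N where N: "((N+c)^(N+c))^k < (2::nat)^(N*N-N)" using asym by blast
  define M where "M = N + (m-2)"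
  have "Pow (LL m M) \<subseteq> CC m T M"
  proof
    fix A assume "A \<in> Pow (LL m M)"
    then obtain g where "g \<in> Sinf" "cfg m T g M = A" using all by blast
    then show "A \<in> CC m T M" unfolding CC_def by blast
  qed
  then have "card (Pow (LL m M)) \<le> card (CC m T M)" by (rule card_mono[OF finite_CC])
  then have "2^card (LL m M) \<le> card (CC m T M)" by (simp add: card_Pow finite_LL)
  moreover have "(2::nat)^(N*N-N) \<le> 2^card (LL m M)"
    using LL_lower[OF m, of N] by (simp add: M_def)
  moreover have "card (CC m T M) \<le> card (CC n (incl n m T) (M + (n-m)))" by (rule CC_incl[OF nm])
  moreover have "M + (n-m) = N + c" using m nm by (simp add: M_def c_def)
  ultimately have "(2::nat)^(N*N-N) \<le> ((N+c)^(N+c))^k" using k by (metis le_trans)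
  then show False using N by simp
qed


definition GG :: "nat \<Rightarrow> nat \<Rightarrow> nat list set \<Rightarrow> (nat list \<Rightarrow> bool) set" where
  "GG m N A = {x \<in> topspace (cube m). \<forall>g\<in>Sinf. \<exists>s\<in>LL m N. x (map g s) \<noteq> (s \<in> A)}"

lemma GG_nowhere_dense:
  assumes m: "m \<ge> 1"
  shows "nowhere_dense_in (cube m) (GG m N A)"
proof (rule nowhere_dense_crit)
  show "GG m N A \<subseteq> topspace (cube m)" by (auto simp: GG_def)
next
  fix U assume U: "openin (cube m) U" "U \<noteq> {}"
  then obtain y where y: "y \<in> U" by blast
  have ytop: "y \<in> topspace (cube m)" using U(1) y openin_subset by blast
  obtain D where D: "finite D" "cyl m y D \<subseteq> U" using open_cyl[OF U(1) y] by blast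
  define E where "E = insert N (\<Union>(set ` D))"
  have finE: "finite E" using D(1) by (simp add: E_def)
  define b where "b = Suc (Max E)"
  have Nb: "N < b" using Max_ge[OF finE, of N] by (simp add: b_def E_def)
  have Db: "z < b" if "s \<in> D" "z \<in> set s" for s z
  proof -
    have "z \<in> E" using that by (auto simp: E_def)
    then have "z \<le> Max E" by (rule Max_ge[OF finE])
    then show ?thesis by (simp add: b_def)
  qed
  define g where "g i = (if i < N then b + i else if b \<le> i \<and> i < b + N then i - b else i)" for i
  have gg: "g (g i) = i" for i using Nb unfolding g_def by auto
  have gid: "g \<circ> g = id" using gg by (simp add: fun_eq_iff)
  have "bij g" by (rule o_bij[OF gid gid])
  then have gS: "g \<in> Sinf" by (simp add: Sinf_def)
  define x where "x = restrict (\<lambda>s. if s \<in> D then y s else map g s \<in> A) (H m)"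
  have xtop: "x \<in> topspace (cube m)" by (simp add: x_def topspace_cube)
  define V where "V = cyl m x (D \<union> map g ` LL m N)"
  have Vopen: "openin (cube m) V" unfolding V_def
    by (rule cyl_open[OF _ xtop]) (simp add: D(1) finite_LL)
  have "x \<in> V" using xtop by (simp add: V_def cyl_def)
  then have Vne: "V \<noteq> {}" by blast
  have "V \<subseteq> cyl m y D"
  proof
    fix z assume z: "z \<in> V"
    have ztop: "z \<in> topspace (cube m)" using z by (simp add: V_def cyl_def)
    have "z s = y s" if s: "s \<in> D" for s
    proof (cases "s \<in> H m")
      case True
      have "z s = x s" using z s by (simp add: V_def cyl_def)
      also have "\<dots> = y s" using True s by (simp add: x_def)
      finally show ?thesis .
    next
      case False
      have "z s = x s" using z s by (simp add: V_def cyl_def)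
      also have "\<dots> = undefined" using False by (simp add: x_def)
      also have "\<dots> = y s" using ytop False by (simp add: topspace_cube PiE_iff extensional_def)
      finally show ?thesis .
    qed
    then show "z \<in> cyl m y D" using ztop by (simp add: cyl_def)
  qed
  then have VU: "V \<subseteq> U" using D(2) by blast
  have "V \<inter> GG m N A = {}"
  proof (rule ccontr)
    assume "V \<inter> GG m N A \<noteq> {}"
    then obtain z where z: "z \<in> V" "z \<in> GG m N A" by blast
    then obtain s where s: "s \<in> LL m N" "z (map g s) \<noteq> (s \<in> A)" using gS by (auto simp: GG_def)
    have sH: "s \<in> H m" and sN: "set s \<subseteq> {..<N}" using s(1) by (auto simp: LL_def)
    have mH: "map g s \<in> H m" by (rule map_H[OF bij_is_inj[OF \<open>bij g\<close>] sH])
    have ne: "s \<noteq> []" using sH m by (auto simp: H_def)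
    have "map g s \<notin> D"
    proof
      assume "map g s \<in> D"
      moreover have "g (hd s) \<in> set (map g s)" using ne by simp
      ultimately have "g (hd s) < b" using Db by blast
      moreover have "hd s < N" using sN ne hd_in_set by blast
      ultimately show False by (simp add: g_def)
    qed
    have "z (map g s) = x (map g s)" using z(1) s(1) by (simp add: V_def cyl_def)
    also have "\<dots> = (map g (map g s) \<in> A)" using mH \<open>map g s \<notin> D\<close> by (simp add: x_def)
    also have "map g (map g s) = s" by (simp add: map_idI gg)
    finally show False using s(2) by simp
  qed
  then show "\<exists>V. openin (cube m) V \<and> V \<noteq> {} \<and> V \<subseteq> U \<and> V \<inter> GG m N A = {}"
    using Vopen Vne VU by blast
qed

lemma chi_in_GG:
  assumes "A \<subseteq> LL m N" "\<forall>g\<in>Sinf. cfg m T g N \<noteq> A"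
  shows "chi m T \<in> GG m N A"
  unfolding GG_def
proof (intro CollectI conjI ballI chi_in)
  fix g assume g: "g \<in> Sinf"
  have "cfg m T g N \<noteq> A" using assms(2) g by blast
  moreover have "cfg m T g N \<subseteq> LL m N" by (auto simp: cfg_def)
  ultimately obtain s where s: "s \<in> LL m N" "(s \<in> cfg m T g N) \<noteq> (s \<in> A)" using assms(1) by blast
  have "map g s \<in> H m" using map_H[OF Sinf_inj[OF g]] s(1) by (simp add: LL_def)
  then have "chi m T (map g s) = (s \<in> cfg m T g N)" using s(1) by (simp add: chi_def cfg_def)
  then show "\<exists>s\<in>LL m N. chi m T (map g s) \<noteq> (s \<in> A)" using s by metis
qed

theorem mainTheorem6:
  fixes m :: nat
  assumes "m \<ge> 2"
  shows "meager_in (cube m) (chi m ` Bprime m) \<and>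
         (\<forall>T. T \<subseteq> H m \<and> cube m closure_of orbit m (chi m T) = topspace (cube m)
              \<longrightarrow> T \<notin> Bprime m)"
proof
  define F where "F k = GG m (fst (prod_decode k)) (set (from_nat (snd (prod_decode k)) :: nat list list))" for k
  have "\<forall>k. nowhere_dense_in (cube m) (F k)" unfolding F_def
    using GG_nowhere_dense assms by simp
  moreover have "chi m ` Bprime m \<subseteq> (\<Union>k. F k)"
  proof
    fix c assume "c \<in> chi m ` Bprime m"
    then obtain T where T: "T \<in> Bprime m" "c = chi m T" by blast
    then obtain n where n: "n \<ge> m" "incl n m T \<in> Balg n" by (auto simp: Bprime_def)
    obtain N A where NA: "A \<subseteq> LL m N" "\<forall>g\<in>Sinf. cfg m T g N \<noteq> A"
      using key[OF assms n] by blast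
    have "finite A" using NA(1) finite_LL finite_subset by blast
    then obtain xs :: "nat list list" where xs: "set xs = A" using finite_list by blast
    define k where "k = prod_encode (N, to_nat xs)"
    have "F k = GG m N A" by (simp add: F_def k_def xs)
    then show "c \<in> (\<Union>k. F k)" using chi_in_GG[OF NA] T(2) by blast
  qed
  ultimately show "meager_in (cube m) (chi m ` Bprime m)" unfolding meager_in_def by blast
next
  show "\<forall>T. T \<subseteq> H m \<and> cube m closure_of orbit m (chi m T) = topspace (cube m) \<longrightarrow> T \<notin> Bprime m"
  proof (intro allI impI notI)
    fix T assume T: "T \<subseteq> H m \<and> cube m closure_of orbit m (chi m T) = topspace (cube m)"
      and TB: "T \<in> Bprime m"
    then obtain n where n: "n \<ge> m" "incl n m T \<in> Balg n" by (auto simp: Bprime_def)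
    obtain N A where NA: "A \<subseteq> LL m N" "\<forall>g\<in>Sinf. cfg m T g N \<noteq> A"
      using key[OF assms n] by blast
    define x where "x = restrict (\<lambda>s. s \<in> A) (H m)"
    have xtop: "x \<in> topspace (cube m)" by (simp add: x_def topspace_cube)
    then have "x \<in> cube m closure_of orbit m (chi m T)" using T by simp
    then have "\<forall>D. finite D \<longrightarrow> (\<exists>a\<in>orbit m (chi m T). \<forall>s\<in>D. a s = x s)"
      using closure_char[OF xtop orbit_sub] by (rule iffD1[rotated])
    then obtain a where a: "a \<in> orbit m (chi m T)" "\<forall>s\<in>LL m N. a s = x s"
      using finite_LL by blast
    then obtain g where g: "g \<in> Sinf" "a = act m (chi m T) g" by (auto simp: orbit_def)
    have "cfg m T g N = A"
    proof -
      have "s \<in> cfg m T g N \<longleftrightarrow> s \<in> A" for s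
      proof (cases "s \<in> LL m N")
        case False then show ?thesis using NA(1) by (auto simp: cfg_def)
      next
        case True
        have sH: "s \<in> H m" using True by (simp add: LL_def)
        have mH: "map g s \<in> H m" by (rule map_H[OF Sinf_inj[OF g(1)] sH])
        have "s \<in> cfg m T g N \<longleftrightarrow> map g s \<in> T" using True by (simp add: cfg_def)
        also have "\<dots> \<longleftrightarrow> a s" using g(2) sH mH by (simp add: act_def chi_def)
        also have "\<dots> \<longleftrightarrow> x s" using a(2) True by simp
        also have "\<dots> \<longleftrightarrow> s \<in> A" using sH by (simp add: x_def)
        finally show ?thesis .
      qed
      then show ?thesis by blast
    qed
    then show False using NA(2) g(1) by blast
  qed
qed

end
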